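(* Let $X=\{x_i\}_{i\in\mathbb Z}$ be an equidistant discretization of $\mathbb R$ with $x_i<x_j$ for $i<j$, let $p$ be a noise function on $X$, and let $M_q$ be the additive noise mechanism with noise $p$ for a query $q$ of sensitivity $s$, where $s=x_i-x_j$ for some $i,j\in\mathbb Z$. Let $\varepsilon,\delta\ge 0$. Suppose that for every $r\in\{x_i-x_j: i,j\in\mathbb Z\}$ with $r\le s$ and every $S\subseteq X$, $$\sum_{x\in S}p(x)\le\delta+e^{\varepsilon}\sum_{x\in S}p(x+r).$$ Then $M_q$ is $(\varepsilon,\delta)$-ADP for any query output in $\mathbb R$.
   Context: A noise function on $X$ is a map $p:X\to[0,1]$ with $\sum_{x\in X}p(x)=1$ (with $p(y)$ understood for $y=x+r\in X$). Sampling from $p$: first sample $x_i\in X$ with probability $p(x_i)$, then sample uniformly from $[\tfrac{x_{i-1}+x_i}{2},\tfrac{x_i+x_{i+1}}{2})$; thus the continuous noise has density $\sum_{x\in X}\mathbb 1[\,y\in[x-\nu/2,x+\nu/2)\,]\,p(x)/\nu$, where $\nu$ is the grid spacing. For a query $q:\mathcal D\to\mathbb R$ on databases with a neighboring relation, its sensitivity is $s=\max_{D_1,D_2\text{ neighboring}}|q(D_1)-q(D_2)|$. The additive noise mechanism is $M_q(D)=q(D)+y$ with $y$ sampled from $p$. A mechanism $M$ is $(\varepsilon,\delta)$-ADP if for all measurable output sets $S$ and all neighboring $D_0,D_1$: $\Pr[M(D_0)\in S]\le e^{\varepsilon}\Pr[M(D_1)\in S]+\delta$. *)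

theory Defs
  imports "HOL-Probability.Probability"
begin

definition equidistant_grid :: "(int \<Rightarrow> real) \<Rightarrow> real \<Rightarrow> bool" where
  "equidistant_grid x \<nu> \<longleftrightarrow> \<nu> > 0 \<and> (\<forall>i. x i = x 0 + real_of_int i * \<nu>)"

definition noise_function :: "real set \<Rightarrow> (real \<Rightarrow> real) \<Rightarrow> bool" where
  "noise_function X p \<longleftrightarrow> (\<forall>x\<in>X. 0 \<le> p x \<and> p x \<le> 1) \<and> (p has_sum 1) X"

text \<open>Density of the continuous noise obtained by sampling a grid point x i with
  probability p (x i) and then uniformly from [x i - nu/2, x i + nu/2).\<close>
definition noise_density :: "(int \<Rightarrow> real) \<Rightarrow> real \<Rightarrow> (real \<Rightarrow> real) \<Rightarrow> real \<Rightarrow> real" where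
  "noise_density x \<nu> p y =
     (\<Sum>\<^sub>\<infinity>i\<in>(UNIV::int set). indicator {x i - \<nu>/2 ..< x i + \<nu>/2} y * p (x i) / \<nu>)"

definition noise_measure :: "(int \<Rightarrow> real) \<Rightarrow> real \<Rightarrow> (real \<Rightarrow> real) \<Rightarrow> real measure" where
  "noise_measure x \<nu> p = density lborel (\<lambda>y. ennreal (noise_density x \<nu> p y))"

definition additive_noise_mechanism ::
  "(int \<Rightarrow> real) \<Rightarrow> real \<Rightarrow> (real \<Rightarrow> real) \<Rightarrow> ('d \<Rightarrow> real) \<Rightarrow> 'd \<Rightarrow> real measure" where
  "additive_noise_mechanism x \<nu> p q D = distr (noise_measure x \<nu> p) borel (\<lambda>y. q D + y)"

definition is_sensitivity :: "('d \<Rightarrow> 'd \<Rightarrow> bool) \<Rightarrow> ('d \<Rightarrow> real) \<Rightarrow> real \<Rightarrow> bool" where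
  "is_sensitivity nb q s \<longleftrightarrow>
     (\<forall>D1 D2. nb D1 D2 \<longrightarrow> \<bar>q D1 - q D2\<bar> \<le> s) \<and>
     (\<exists>D1 D2. nb D1 D2 \<and> \<bar>q D1 - q D2\<bar> = s)"

definition ADP :: "('d \<Rightarrow> 'd \<Rightarrow> bool) \<Rightarrow> ('d \<Rightarrow> real measure) \<Rightarrow> real \<Rightarrow> real \<Rightarrow> bool" where
  "ADP nb M \<epsilon> \<delta> \<longleftrightarrow>
     (\<forall>S \<in> sets borel. \<forall>D0 D1. nb D0 D1 \<longrightarrow>
        measure (M D0) S \<le> exp \<epsilon> * measure (M D1) S + \<delta>)"

end

theory Submission
  imports Defs
begin

lemma nn_count_infsum:
  fixes g :: "'a \<Rightarrow> real"
  assumes sum: "g summable_on UNIV" and nn: "\<And>i. g i \<ge> 0"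
  shows "(\<integral>\<^sup>+i. ennreal (g i) * indicator T i \<partial>count_space UNIV) = ennreal (infsum g T)"
proof -
  have sT: "g summable_on T" using summable_on_subset_banach[OF sum] by auto
  hence "(\<lambda>i. norm (g i)) summable_on T" using nn by simp
  note a = this[unfolded abs_summable_equivalent]
  have "(\<integral>\<^sup>+i. ennreal (g i) * indicator T i \<partial>count_space UNIV) = (\<integral>\<^sup>+i. ennreal (g i) \<partial>count_space T)"
    by (simp add: nn_integral_count_space_indicator)
  also have "\<dots> = ennreal (infsetsum g T)"
    by (rule nn_integral_conv_infsetsum[OF a]) (use nn in auto)
  also have "\<dots> = ennreal (infsum g T)" using infsetsum_infsum[OF a] by simp
  finally show ?thesis .
qed

lemma cell_iff:
  fixes c \<nu> y :: real and i :: int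
  assumes "\<nu> > 0"
  shows "(c + of_int i * \<nu> - \<nu>/2 \<le> y \<and> y < c + of_int i * \<nu> + \<nu>/2) \<longleftrightarrow> i = \<lfloor>(y - c)/\<nu> + 1/2\<rfloor>"
proof -
  have "(c + of_int i * \<nu> - \<nu>/2 \<le> y) \<longleftrightarrow> of_int i \<le> (y - c)/\<nu> + 1/2"
    using assms by (simp add: field_simps)
  moreover have "(y < c + of_int i * \<nu> + \<nu>/2) \<longleftrightarrow> (y - c)/\<nu> + 1/2 < of_int i + 1"
    using assms by (simp add: field_simps)
  ultimately show ?thesis by (metis floor_eq_iff)
qed

lemma periodize:
  fixes F :: "real \<Rightarrow> ennreal" and c \<nu> :: real
  assumes nu: "\<nu> > 0" and Fm[measurable]: "F \<in> borel_measurable borel"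
  shows "(\<integral>\<^sup>+y. F y \<partial>lborel) =
    (\<integral>\<^sup>+u. indicator {-\<nu>/2..<\<nu>/2} u * (\<integral>\<^sup>+i. F (c + of_int i * \<nu> + u) \<partial>count_space (UNIV::int set)) \<partial>lborel)"
proof -
  interpret C: sigma_finite_measure "count_space (UNIV::int set)"
    by (rule sigma_finite_measure_count_space)
  interpret P: pair_sigma_finite "count_space (UNIV::int set)" lborel ..
  define W where "W = {-\<nu>/2..<\<nu>/2}"
  have m1: "case_prod (\<lambda>i u. indicator W u * F (c + of_int i * \<nu> + u)) \<in> borel_measurable (count_space UNIV \<Otimes>\<^sub>M lborel)"
  proof -
    have "(\<lambda>z. (\<lambda>i z. indicator W (snd z) * F (c + of_int i * \<nu> + snd z)) (fst z) z) \<in> borel_measurable (count_space UNIV \<Otimes>\<^sub>M lborel)"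
      by (rule measurable_compose_countable'[where I=UNIV]) (auto simp: W_def)
    thus ?thesis by (simp add: case_prod_beta)
  qed
  have m2: "case_prod (\<lambda>i y. indicator {c + of_int i * \<nu> - \<nu>/2..<c + of_int i * \<nu> + \<nu>/2} y * F y) \<in> borel_measurable (count_space UNIV \<Otimes>\<^sub>M lborel)"
  proof -
    have "(\<lambda>z. (\<lambda>i z. indicator {c + of_int i * \<nu> - \<nu>/2..<c + of_int i * \<nu> + \<nu>/2} (snd z) * F (snd z)) (fst z) z) \<in> borel_measurable (count_space UNIV \<Otimes>\<^sub>M lborel)"
      by (rule measurable_compose_countable'[where I=UNIV]) auto
    thus ?thesis by (simp add: case_prod_beta)
  qed
  have "(\<integral>\<^sup>+u. indicator W u * (\<integral>\<^sup>+i. F (c + of_int i * \<nu> + u) \<partial>count_space UNIV) \<partial>lborel)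
      = (\<integral>\<^sup>+u. (\<integral>\<^sup>+i. indicator W u * F (c + of_int i * \<nu> + u) \<partial>count_space UNIV) \<partial>lborel)"
    by (simp add: nn_integral_cmult)
  also have "\<dots> = (\<integral>\<^sup>+i. (\<integral>\<^sup>+u. indicator W u * F (c + of_int i * \<nu> + u) \<partial>lborel) \<partial>count_space UNIV)"
    by (rule P.Fubini'[OF m1])
  also have "\<dots> = (\<integral>\<^sup>+i. (\<integral>\<^sup>+y. indicator {c + of_int i * \<nu> - \<nu>/2..<c + of_int i * \<nu> + \<nu>/2} y * F y \<partial>lborel) \<partial>count_space UNIV)"
  proof (rule nn_integral_cong)
    fix i :: int
    have "(\<integral>\<^sup>+y. indicator {c + of_int i * \<nu> - \<nu>/2..<c + of_int i * \<nu> + \<nu>/2} y * F y \<partial>lborel)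
        = (\<integral>\<^sup>+u. indicator {c + of_int i * \<nu> - \<nu>/2..<c + of_int i * \<nu> + \<nu>/2} ((c + of_int i * \<nu>) + u) * F ((c + of_int i * \<nu>) + u) \<partial>lborel)"
      using nn_integral_real_affine[where c=1 and t="c + of_int i * \<nu>" and f="\<lambda>y. indicator {c + of_int i * \<nu> - \<nu>/2..<c + of_int i * \<nu> + \<nu>/2} y * F y"] by simp
    also have "\<dots> = (\<integral>\<^sup>+u. indicator W u * F (c + of_int i * \<nu> + u) \<partial>lborel)"
      by (intro nn_integral_cong) (auto simp: W_def indicator_def)
    finally show "(\<integral>\<^sup>+u. indicator W u * F (c + of_int i * \<nu> + u) \<partial>lborel) = (\<integral>\<^sup>+y. indicator {c + of_int i * \<nu> - \<nu>/2..<c + of_int i * \<nu> + \<nu>/2} y * F y \<partial>lborel)"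
      by simp
  qed
  also have "\<dots> = (\<integral>\<^sup>+y. (\<integral>\<^sup>+i. indicator {c + of_int i * \<nu> - \<nu>/2..<c + of_int i * \<nu> + \<nu>/2} y * F y \<partial>count_space UNIV) \<partial>lborel)"
    by (rule P.Fubini'[OF m2, symmetric])
  also have "\<dots> = (\<integral>\<^sup>+y. F y \<partial>lborel)"
  proof (rule nn_integral_cong)
    fix y :: real
    have "(\<integral>\<^sup>+i. indicator {c + of_int i * \<nu> - \<nu>/2..<c + of_int i * \<nu> + \<nu>/2} y * F y \<partial>count_space UNIV)
       = (\<integral>\<^sup>+i. F y * indicator {\<lfloor>(y - c)/\<nu> + 1/2\<rfloor>} i \<partial>count_space UNIV)"
      by (intro nn_integral_cong) (auto simp: indicator_def cell_iff[OF nu])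
    also have "\<dots> = F y"
      by (simp add: nn_integral_cmult_indicator)
    finally show "(\<integral>\<^sup>+i. indicator {c + of_int i * \<nu> - \<nu>/2..<c + of_int i * \<nu> + \<nu>/2} y * F y \<partial>count_space UNIV) = F y" .
  qed
  finally show ?thesis using nu by (simp add: W_def)
qed

lemma meas_count:
  fixes f :: "int \<Rightarrow> real \<Rightarrow> ennreal"
  assumes "\<And>i. f i \<in> borel_measurable borel"
  shows "(\<lambda>u. \<integral>\<^sup>+i. f i u \<partial>count_space UNIV) \<in> borel_measurable borel"
proof -
  interpret C: sigma_finite_measure "count_space (UNIV::int set)"
    by (rule sigma_finite_measure_count_space)
  have "(\<lambda>z. (\<lambda>i z. f i (fst z)) (snd z) z) \<in> borel_measurable (borel \<Otimes>\<^sub>M count_space UNIV)"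
    by (rule measurable_compose_countable'[where I=UNIV]) (use assms in auto)
  hence "case_prod (\<lambda>u i. f i u) \<in> borel_measurable (borel \<Otimes>\<^sub>M count_space UNIV)"
    by (simp add: case_prod_beta)
  thus ?thesis by (rule C.borel_measurable_nn_integral)
qed

theorem lemma3:
  fixes x :: "int \<Rightarrow> real" and \<nu> :: real and p :: "real \<Rightarrow> real"
    and nb :: "'d \<Rightarrow> 'd \<Rightarrow> bool" and q :: "'d \<Rightarrow> real"
    and s \<epsilon> \<delta> :: real
  assumes grid: "equidistant_grid x \<nu>"
    and noise: "noise_function (range x) p"
    and sens: "is_sensitivity nb q s"
    and s_grid: "\<exists>i j. s = x i - x j"
    and eps: "\<epsilon> \<ge> 0" and del: "\<delta> \<ge> 0"
    and hyp: "\<forall>r \<in> {x i - x j | i j. True}. r \<le> s \<longrightarrow>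
               (\<forall>S \<subseteq> range x.
                  (\<Sum>\<^sub>\<infinity>y\<in>S. p y) \<le> \<delta> + exp \<epsilon> * (\<Sum>\<^sub>\<infinity>y\<in>S. p (y + r)))"
  shows "ADP nb (additive_noise_mechanism x \<nu> p q) \<epsilon> \<delta>"
proof -
  have gg: "\<nu> > 0 \<and> (\<forall>i. x i = x 0 + of_int i * \<nu>)"
    using grid unfolding equidistant_grid_def .
  have nu: "\<nu> > 0" using gg by blast
  have xi: "x i = x 0 + of_int i * \<nu>" for i using gg by blast
  define c where "c = x 0"
  have xi': "x i = c + of_int i * \<nu>" for i unfolding c_def by (rule xi)
  define nd where "nd y = p (x \<lfloor>(y - c)/\<nu> + 1/2\<rfloor>) / \<nu>" for y
  have nd_eq: "noise_density x \<nu> p y = nd y" for y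
  proof -
    have "noise_density x \<nu> p y = (\<Sum>\<^sub>\<infinity>i\<in>{\<lfloor>(y - c)/\<nu> + 1/2\<rfloor>}. p (x i) / \<nu>)"
      unfolding noise_density_def
    proof (rule infsum_cong_neutral)
      fix i assume "i \<in> UNIV - {\<lfloor>(y - c)/\<nu> + 1/2\<rfloor>}"
      thus "indicator {x i - \<nu> / 2..<x i + \<nu> / 2} y * p (x i) / \<nu> = 0"
        using cell_iff[OF nu, of c i y] by (auto simp: xi' indicator_def)
    next
      fix i assume "i \<in> UNIV \<inter> {\<lfloor>(y - c)/\<nu> + 1/2\<rfloor>}"
      thus "indicator {x i - \<nu> / 2..<x i + \<nu> / 2} y * p (x i) / \<nu> = p (x i) / \<nu>"
        using cell_iff[OF nu, of c i y] by (auto simp: xi' indicator_def)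
    qed auto
    thus ?thesis by (simp add: nd_def)
  qed
  have nd_shift: "nd (c + of_int i * \<nu> + t) = p (x (i + \<lfloor>t/\<nu> + 1/2\<rfloor>)) / \<nu>" for i t
  proof -
    have "(c + of_int i * \<nu> + t - c)/\<nu> + 1/2 = t/\<nu> + 1/2 + of_int i"
      using nu by (simp add: field_simps)
    hence "\<lfloor>(c + of_int i * \<nu> + t - c)/\<nu> + 1/2\<rfloor> = i + \<lfloor>t/\<nu> + 1/2\<rfloor>"
      by (metis floor_add_int add.commute)
    thus ?thesis unfolding nd_def by simp
  qed
  have ndm[measurable]: "(\<lambda>y. ennreal (nd y)) \<in> borel_measurable borel"
    unfolding nd_def by measurable
  have injx: "inj x"
    by (rule injI) (use nu in \<open>auto simp: xi'\<close>)
  have px_hs: "(p has_sum 1) (range x)" using noise unfolding noise_function_def by auto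
  have px_nn: "\<And>i. p (x i) \<ge> 0" using noise unfolding noise_function_def by auto
  have px_sum: "(p \<circ> x) summable_on UNIV"
    using px_hs summable_on_reindex[OF inj_on_subset[OF injx], of UNIV p] 
    by (auto simp: summable_on_def)
  have px_one: "infsum (p \<circ> x) UNIV = 1"
  proof -
    have "infsum p (range x) = 1" using px_hs by (rule infsumI)
    moreover have "infsum p (range x) = infsum (p \<circ> x) UNIV"
      using injx by (rule infsum_reindex)
    ultimately show ?thesis by simp
  qed
  have sum_div: "(\<lambda>i. g i / \<nu>) summable_on UNIV" if "g summable_on UNIV" for g :: "int \<Rightarrow> real"
    using summable_on_cmult_left[OF that, of "1/\<nu>"] by simp
  have inf_div: "infsum (\<lambda>i. g i / \<nu>) T = infsum g T / \<nu>" if "g summable_on UNIV" for g :: "int \<Rightarrow> real" and T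
    using infsum_cmult_left[of "1/\<nu>" g T] summable_on_subset_banach[OF that] by simp
  have shift_sum: "(\<lambda>i. p (x (i + n))) summable_on UNIV" for n
  proof -
    have "range (\<lambda>i. i + n) = UNIV" by (rule surjI[of _ "\<lambda>i. i - n"]) simp
    hence "(p \<circ> x) summable_on range (\<lambda>i. i + n)" using px_sum by simp
    thus ?thesis using summable_on_reindex[of "\<lambda>i. i + n" UNIV "p \<circ> x"] by (simp add: comp_def)
  qed
  define W where "W = {-\<nu>/2..<\<nu>/2::real}"
  have W_floor: "\<lfloor>u/\<nu> + 1/2\<rfloor> = 0" if "u \<in> W" for u
  proof -
    have u1: "-\<nu>/2 \<le> u" and u2: "u < \<nu>/2" using that by (auto simp: W_def)
    have "0 \<le> u/\<nu> + 1/2" using u1 nu by (simp add: field_simps)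
    moreover have "u/\<nu> + 1/2 < 1" using u2 nu by (simp add: field_simps)
    ultimately show ?thesis by (simp add: floor_eq_iff)
  qed
  have emW: "emeasure lborel W = ennreal \<nu>" using nu by (simp add: W_def)
  have Wm[measurable]: "W \<in> sets lborel" "W \<in> sets borel" by (simp_all add: W_def)
  have Eq: "emeasure (additive_noise_mechanism x \<nu> p q D) S = (\<integral>\<^sup>+y. ennreal (nd y) * indicator S (q D + y) \<partial>lborel)"
    if S: "S \<in> sets borel" for S D
  proof -
    have nm: "noise_measure x \<nu> p = density lborel (\<lambda>y. ennreal (nd y))"
      unfolding noise_measure_def by (simp add: nd_eq)
    have pre0: "(\<lambda>y. q D + y) -` S \<inter> space borel \<in> sets borel"
      by (rule measurable_sets[OF _ S]) simp
    hence pre: "(\<lambda>y. q D + y) -` S \<in> sets lborel" by simp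
    have "emeasure (additive_noise_mechanism x \<nu> p q D) S = emeasure (density lborel (\<lambda>y. ennreal (nd y))) ((\<lambda>y. q D + y) -` S)"
      unfolding additive_noise_mechanism_def nm using S by (subst emeasure_distr) auto
    also have "\<dots> = (\<integral>\<^sup>+y. ennreal (nd y) * indicator ((\<lambda>y. q D + y) -` S) y \<partial>lborel)"
      by (rule emeasure_density[OF _ pre]) simp
    also have "\<dots> = (\<integral>\<^sup>+y. ennreal (nd y) * indicator S (q D + y) \<partial>lborel)"
      by (simp add: indicator_def)
    finally show ?thesis .
  qed
  have Ele1: "(\<integral>\<^sup>+y. ennreal (nd y) * indicator S (a + y) \<partial>lborel) \<le> 1" for S a
  proof -
    have "(\<integral>\<^sup>+y. ennreal (nd y) * indicator S (a + y) \<partial>lborel) \<le> (\<integral>\<^sup>+y. ennreal (nd y) \<partial>lborel)"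
      by (intro nn_integral_mono) (auto simp: indicator_def)
    also have "\<dots> = (\<integral>\<^sup>+u. indicator W u * (\<integral>\<^sup>+i. ennreal (nd (c + of_int i * \<nu> + u)) \<partial>count_space UNIV) \<partial>lborel)"
      unfolding W_def by (rule periodize[OF nu]) simp
    also have "\<dots> = (\<integral>\<^sup>+u. ennreal (1/\<nu>) * indicator W u \<partial>lborel)"
    proof (rule nn_integral_cong)
      fix u
      show "indicator W u * (\<integral>\<^sup>+i. ennreal (nd (c + of_int i * \<nu> + u)) \<partial>count_space UNIV) = ennreal (1/\<nu>) * indicator W u"
      proof (cases "u \<in> W")
        case True
        have "(\<integral>\<^sup>+i. ennreal (nd (c + of_int i * \<nu> + u)) \<partial>count_space UNIV)
            = (\<integral>\<^sup>+i. ennreal (p (x i) / \<nu>) * indicator UNIV i \<partial>count_space UNIV)"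
          by (intro nn_integral_cong) (simp add: nd_shift W_floor[OF True])
        also have "\<dots> = ennreal (infsum (\<lambda>i. p (x i) / \<nu>) UNIV)"
          by (rule nn_count_infsum) (use sum_div[OF px_sum] px_nn nu in \<open>auto simp: comp_def\<close>)
        also have "\<dots> = ennreal (1/\<nu>)"
          using inf_div[OF px_sum, of UNIV] px_one by (simp add: comp_def)
        finally show ?thesis using True by simp
      qed simp
    qed
    also have "\<dots> = ennreal (1/\<nu>) * ennreal \<nu>" by (simp add: nn_integral_cmult_indicator[OF Wm(1)] emW)
    also have "\<dots> = 1" using nu by (simp add: ennreal_mult[symmetric])
    finally show ?thesis .
  qed
  obtain i0 j0 where s_eq: "s = x i0 - x j0" using s_grid by auto
  have s_eq': "s = of_int (i0 - j0) * \<nu>" using s_eq by (simp add: xi' algebra_simps)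
  have main: "(\<integral>\<^sup>+y. ennreal (nd y) * indicator S (a0 + y) \<partial>lborel)
      \<le> ennreal \<delta> + ennreal (exp \<epsilon>) * (\<integral>\<^sup>+y. ennreal (nd y) * indicator S (a1 + y) \<partial>lborel)"
    if S[measurable]: "S \<in> sets borel" and d_le: "a0 - a1 \<le> s" for S a0 a1
  proof -
    define d where "d = a0 - a1"
    define G1 where "G1 u = (\<integral>\<^sup>+i. ennreal (nd (c + d + of_int i * \<nu> + u)) * indicator S (a1 + (c + d + of_int i * \<nu> + u)) \<partial>count_space UNIV)" for u
    define G0 where "G0 u = (\<integral>\<^sup>+i. ennreal (nd (c + of_int i * \<nu> + u)) * indicator S (a0 + (c + of_int i * \<nu> + u)) \<partial>count_space UNIV)" for u
    have E0: "(\<integral>\<^sup>+y. ennreal (nd y) * indicator S (a0 + y) \<partial>lborel) = (\<integral>\<^sup>+u. indicator W u * G0 u \<partial>lborel)"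
      unfolding W_def G0_def by (rule periodize[OF nu]) simp
    have E1: "(\<integral>\<^sup>+y. ennreal (nd y) * indicator S (a1 + y) \<partial>lborel) = (\<integral>\<^sup>+u. indicator W u * G1 u \<partial>lborel)"
      unfolding W_def G1_def by (rule periodize[OF nu]) simp
    have G1m: "(\<lambda>u. indicator W u * G1 u) \<in> borel_measurable borel"
    proof -
      have "G1 \<in> borel_measurable borel" unfolding G1_def by (rule meas_count) simp
      thus ?thesis unfolding W_def by simp
    qed
    have pt: "G0 u \<le> ennreal (\<delta>/\<nu>) + ennreal (exp \<epsilon>) * G1 u" if u: "u \<in> W" for u
    proof -
      define n where "n = \<lfloor>(d + u)/\<nu> + 1/2\<rfloor>"
      define T where "T = {i. a0 + (c + of_int i * \<nu> + u) \<in> S}"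
      have G0e: "G0 u = ennreal (infsum (\<lambda>i. p (x i) / \<nu>) T)"
      proof -
        have "G0 u = (\<integral>\<^sup>+i. ennreal (p (x i) / \<nu>) * indicator T i \<partial>count_space UNIV)"
          unfolding G0_def by (intro nn_integral_cong) (simp add: nd_shift W_floor[OF u] T_def indicator_def)
        also have "\<dots> = ennreal (infsum (\<lambda>i. p (x i) / \<nu>) T)"
          by (rule nn_count_infsum) (use sum_div[OF px_sum] px_nn nu in \<open>auto simp: comp_def\<close>)
        finally show ?thesis .
      qed
      have G1e: "G1 u = ennreal (infsum (\<lambda>i. p (x (i + n)) / \<nu>) T)"
      proof -
        have "G1 u = (\<integral>\<^sup>+i. ennreal (p (x (i + n)) / \<nu>) * indicator T i \<partial>count_space UNIV)"
        unfolding G1_def proof (intro nn_integral_cong)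
          fix i
          have "c + d + of_int i * \<nu> + u = c + of_int i * \<nu> + (d + u)" by simp
          hence e1: "nd (c + d + of_int i * \<nu> + u) = p (x (i + n)) / \<nu>" by (simp only: nd_shift n_def)
          have e2: "a1 + (c + d + of_int i * \<nu> + u) = a0 + (c + of_int i * \<nu> + u)" by (simp add: d_def)
          show "ennreal (nd (c + d + of_int i * \<nu> + u)) * indicator S (a1 + (c + d + of_int i * \<nu> + u)) = ennreal (p (x (i + n)) / \<nu>) * indicator T i"
            unfolding e1 e2 by (simp add: T_def indicator_def)
        qed
        also have "\<dots> = ennreal (infsum (\<lambda>i. p (x (i + n)) / \<nu>) T)"
          by (rule nn_count_infsum) (use sum_div[OF shift_sum] px_nn nu in auto)
        finally show ?thesis .
      qed
      define r where "r = x n - x 0"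
      have r_eq: "r = of_int n * \<nu>" by (simp add: r_def xi')
      have "n < i0 - j0 + 1"
      proof -
        have "(d + u)/\<nu> + 1/2 < of_int (i0 - j0) + 1"
          using u nu d_le s_eq' by (simp add: W_def d_def field_simps)
        thus ?thesis unfolding n_def by (metis floor_less_iff of_int_1 of_int_add of_int_diff)
      qed
      hence "r \<le> s" using nu by (simp add: r_eq s_eq')
      moreover have "r \<in> {x i - x j | i j. True}" using r_def by blast
      moreover have "x ` T \<subseteq> range x" by auto
      ultimately have h: "(\<Sum>\<^sub>\<infinity>y\<in>x ` T. p y) \<le> \<delta> + exp \<epsilon> * (\<Sum>\<^sub>\<infinity>y\<in>x ` T. p (y + r))"
        using hyp by blast
      have h1: "(\<Sum>\<^sub>\<infinity>y\<in>x ` T. p y) = infsum (\<lambda>i. p (x i)) T"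
        using infsum_reindex[OF inj_on_subset[OF injx], of T p] by (simp add: comp_def)
      have h2: "(\<Sum>\<^sub>\<infinity>y\<in>x ` T. p (y + r)) = infsum (\<lambda>i. p (x (i + n))) T"
      proof -
        have "(\<Sum>\<^sub>\<infinity>y\<in>x ` T. p (y + r)) = infsum (\<lambda>i. p (x i + r)) T"
          using infsum_reindex[OF inj_on_subset[OF injx], of T "\<lambda>y. p (y + r)"] by (simp add: comp_def)
        also have "\<dots> = infsum (\<lambda>i. p (x (i + n))) T"
          by (intro infsum_cong) (simp add: r_eq xi' algebra_simps)
        finally show ?thesis .
      qed
      have B0: "infsum (\<lambda>i. p (x (i + n))) T \<ge> 0" by (rule infsum_nonneg) (use px_nn in auto)
      have real_ineq: "infsum (\<lambda>i. p (x i) / \<nu>) T \<le> \<delta>/\<nu> + exp \<epsilon> * infsum (\<lambda>i. p (x (i + n)) / \<nu>) T"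
      proof -
        have "infsum (\<lambda>i. p (x i)) T \<le> \<delta> + exp \<epsilon> * infsum (\<lambda>i. p (x (i + n))) T"
          using h h1 h2 by simp
        hence "infsum (\<lambda>i. p (x i)) T / \<nu> \<le> (\<delta> + exp \<epsilon> * infsum (\<lambda>i. p (x (i + n))) T) / \<nu>"
          using nu by (simp add: divide_right_mono)
        moreover have "infsum (\<lambda>i. p (x i) / \<nu>) T = infsum (\<lambda>i. p (x i)) T / \<nu>"
          using inf_div[OF px_sum] by (simp add: comp_def)
        moreover have "infsum (\<lambda>i. p (x (i + n)) / \<nu>) T = infsum (\<lambda>i. p (x (i + n))) T / \<nu>"
          using inf_div[OF shift_sum] by simp
        ultimately show ?thesis by (simp add: add_divide_distrib)
      qed
      have B0': "infsum (\<lambda>i. p (x (i + n)) / \<nu>) T \<ge> 0"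
        by (rule infsum_nonneg) (use px_nn nu in auto)
      have "ennreal (infsum (\<lambda>i. p (x i) / \<nu>) T) \<le> ennreal (\<delta>/\<nu> + exp \<epsilon> * infsum (\<lambda>i. p (x (i + n)) / \<nu>) T)"
        using real_ineq by (rule ennreal_leI)
      also have "\<dots> = ennreal (\<delta>/\<nu>) + ennreal (exp \<epsilon>) * ennreal (infsum (\<lambda>i. p (x (i + n)) / \<nu>) T)"
        using del nu B0' by (simp add: ennreal_plus ennreal_mult)
      finally show ?thesis using G0e G1e by simp
    qed
    have "(\<integral>\<^sup>+u. indicator W u * G0 u \<partial>lborel) \<le> (\<integral>\<^sup>+u. ennreal (\<delta>/\<nu>) * indicator W u + ennreal (exp \<epsilon>) * (indicator W u * G1 u) \<partial>lborel)"
    proof (rule nn_integral_mono)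
      fix u
      show "indicator W u * G0 u \<le> ennreal (\<delta>/\<nu>) * indicator W u + ennreal (exp \<epsilon>) * (indicator W u * G1 u)"
        using pt[of u] by (cases "u \<in> W") auto
    qed
    also have "\<dots> = ennreal (\<delta>/\<nu>) * emeasure lborel W + ennreal (exp \<epsilon>) * (\<integral>\<^sup>+u. indicator W u * G1 u \<partial>lborel)"
      using G1m by (simp add: nn_integral_add nn_integral_cmult nn_integral_cmult_indicator[OF Wm(1)])
    also have "\<dots> = ennreal \<delta> + ennreal (exp \<epsilon>) * (\<integral>\<^sup>+u. indicator W u * G1 u \<partial>lborel)"
      using nu del by (simp add: emW ennreal_mult[symmetric])
    finally show ?thesis using E0 E1 by simp
  qed
  show ?thesis unfolding ADP_def
  proof (intro ballI allI impI)
    fix S :: "real set" and D0 D1 assume S: "S \<in> sets borel" and nbD: "nb D0 D1"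
    have "\<bar>q D0 - q D1\<bar> \<le> s" using sens nbD unfolding is_sensitivity_def by blast
    hence dle: "q D0 - q D1 \<le> s" by linarith
    define E0 where "E0 = emeasure (additive_noise_mechanism x \<nu> p q D0) S"
    define E1 where "E1 = emeasure (additive_noise_mechanism x \<nu> p q D1) S"
    have E1le: "E1 \<le> 1" unfolding E1_def Eq[OF S] by (rule Ele1)
    have ineq: "E0 \<le> ennreal \<delta> + ennreal (exp \<epsilon>) * E1"
      unfolding E0_def E1_def Eq[OF S] by (rule main[OF S dle])
    obtain e1 where e1: "E1 = ennreal e1" "e1 \<ge> 0"
      using E1le by (cases E1) (auto simp: top_unique)
    have "E0 \<le> ennreal (\<delta> + exp \<epsilon> * e1)"
      using ineq e1 del by (simp add: ennreal_plus ennreal_mult)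
    hence "enn2real E0 \<le> enn2real (ennreal (\<delta> + exp \<epsilon> * e1))"
      by (rule enn2real_mono) simp
    moreover have "enn2real (ennreal (\<delta> + exp \<epsilon> * e1)) = \<delta> + exp \<epsilon> * e1"
      using del e1 by (intro enn2real_ennreal) simp
    ultimately have "enn2real E0 \<le> \<delta> + exp \<epsilon> * e1" by linarith
    thus "measure (additive_noise_mechanism x \<nu> p q D0) S \<le> exp \<epsilon> * measure (additive_noise_mechanism x \<nu> p q D1) S + \<delta>"
      using e1 by (simp add: measure_def E0_def[symmetric] E1_def[symmetric])
  qed
qed

end
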